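(* Let $H$ be a $(B,C)$-graph and let $\mu(H)$ denote the number of minor faces of $H$. Then $\mu(H) \geq |V(H)| - |V(C)| + 2$ (equivalently, $\mu(H)\ge |B|+2$).
   Context: Let $C$ be a cycle and $B$ a finite set disjoint from $V(C)$. A plane graph $H$ (i.e. a planar graph together with a fixed embedding in the plane) is called a $(B,C)$-graph if $V(H)=B\cup V(C)$, $C$ is a subgraph of $H$ that is an induced subgraph of $H$, the set $B$ is independent in $H$, and every vertex of $B$ has degree exactly $3$ in $H$. The vertices of $B$ are called outer vertices. A face of $H$ is called minor if it is incident with at most one outer vertex, and major otherwise. *)

theory Defs
  imports Main
begin

text \<open>Combinatorial model of plane graphs via rotation systems (combinatorial maps).
A simple graph is a vertex set V and a symmetric irreflexive set E of ordered pairs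
(darts); each undirected edge {u,v} corresponds to the two darts (u,v),(v,u).
An embedding is a rotation rot: a permutation of the darts that cyclically permutes
the darts leaving each vertex. The embedding is plane iff the graph is connected and
Euler's formula |V| - |E| + |F| = 2 holds.\<close>

definition simple_graph :: "'a set \<Rightarrow> ('a \<times> 'a) set \<Rightarrow> bool" where
  "simple_graph V E \<longleftrightarrow> finite V \<and> E \<subseteq> V \<times> V \<and> sym E \<and> irrefl E"

definition rotation_system :: "('a \<times> 'a) set \<Rightarrow> ('a \<times> 'a \<Rightarrow> 'a \<times> 'a) \<Rightarrow> bool" where
  "rotation_system E rot \<longleftrightarrow>
     bij_betw rot E E \<and>
     (\<forall>d\<in>E. fst (rot d) = fst d) \<and>
     (\<forall>d\<in>E. \<forall>d'\<in>E. fst d' = fst d \<longrightarrow> (\<exists>n. (rot ^^ n) d = d'))"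

definition face_perm :: "('a \<times> 'a \<Rightarrow> 'a \<times> 'a) \<Rightarrow> 'a \<times> 'a \<Rightarrow> 'a \<times> 'a" where
  "face_perm rot d = rot (snd d, fst d)"

definition face_of :: "('a \<times> 'a \<Rightarrow> 'a \<times> 'a) \<Rightarrow> 'a \<times> 'a \<Rightarrow> ('a \<times> 'a) set" where
  "face_of rot d = {(face_perm rot ^^ n) d | n. True}"

definition faces :: "('a \<times> 'a) set \<Rightarrow> ('a \<times> 'a \<Rightarrow> 'a \<times> 'a) \<Rightarrow> ('a \<times> 'a) set set" where
  "faces E rot = face_of rot ` E"

definition connected_graph :: "'a set \<Rightarrow> ('a \<times> 'a) set \<Rightarrow> bool" where
  "connected_graph V E \<longleftrightarrow> (\<forall>u\<in>V. \<forall>v\<in>V. (u, v) \<in> E\<^sup>*)"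

text \<open>Plane graph: simple graph with a rotation system of genus 0
(Euler: |V| - |E|/2 + |F| = 2, where E counts darts, i.e. twice the edges).\<close>
definition plane_graph :: "'a set \<Rightarrow> ('a \<times> 'a) set \<Rightarrow> ('a \<times> 'a \<Rightarrow> 'a \<times> 'a) \<Rightarrow> bool" where
  "plane_graph V E rot \<longleftrightarrow> simple_graph V E \<and> rotation_system E rot \<and> connected_graph V E \<and>
     2 * (card V + card (faces E rot)) = card E + 4"

definition face_incident :: "('a \<times> 'a) set \<Rightarrow> 'a \<Rightarrow> bool" where
  "face_incident f v \<longleftrightarrow> (\<exists>d\<in>f. fst d = v)"

definition cycle_edge :: "'a list \<Rightarrow> 'a \<Rightarrow> 'a \<Rightarrow> bool" where
  "cycle_edge cs u v \<longleftrightarrow> (\<exists>i<length cs.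
      (u = cs ! i \<and> v = cs ! ((i + 1) mod length cs)) \<or>
      (v = cs ! i \<and> u = cs ! ((i + 1) mod length cs)))"

definition BC_graph :: "'a set \<Rightarrow> 'a list \<Rightarrow> 'a set \<Rightarrow> ('a \<times> 'a) set \<Rightarrow> ('a \<times> 'a \<Rightarrow> 'a \<times> 'a) \<Rightarrow> bool" where
  "BC_graph B cs V E rot \<longleftrightarrow>
     distinct cs \<and> length cs \<ge> 3 \<and> finite B \<and> B \<inter> set cs = {} \<and>
     plane_graph V E rot \<and>
     V = B \<union> set cs \<and>
     (\<forall>u\<in>set cs. \<forall>v\<in>set cs. (u, v) \<in> E \<longleftrightarrow> cycle_edge cs u v) \<and>
     (\<forall>u\<in>B. \<forall>v\<in>B. (u, v) \<notin> E) \<and>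
     (\<forall>b\<in>B. card {w. (b, w) \<in> E} = 3)"

definition minor_face :: "'a set \<Rightarrow> ('a \<times> 'a) set \<Rightarrow> bool" where
  "minor_face B f \<longleftrightarrow> card {v\<in>B. face_incident f v} \<le> 1"

definition num_minor_faces :: "'a set \<Rightarrow> ('a \<times> 'a) set \<Rightarrow> ('a \<times> 'a \<Rightarrow> 'a \<times> 'a) \<Rightarrow> nat" where
  "num_minor_faces B E rot = card {f \<in> faces E rot. minor_face B f}"

end

theory Submission
  imports Defs
begin

lemma funpow_in: "bij_betw g E E \<Longrightarrow> d \<in> E \<Longrightarrow> (g ^^ n) d \<in> E"
  using bij_betw_funpow bij_betwE by metis

lemma orbit_period:
  assumes fin: "finite E" and bij: "bij_betw g E E" and d: "d \<in> E"
  shows "\<exists>p>0. (g ^^ p) d = d"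
proof -
  let ?h = "\<lambda>n::nat. (g ^^ n) d"
  have sub: "?h ` {..card E} \<subseteq> E" using funpow_in[OF bij d] by auto
  have "\<not> inj_on ?h {..card E}"
  proof
    assume "inj_on ?h {..card E}"
    hence "card (?h ` {..card E}) = card E + 1" by (simp add: card_image)
    moreover have "card (?h ` {..card E}) \<le> card E" using card_mono[OF fin sub] .
    ultimately show False by simp
  qed
  then obtain i j where ij: "i \<noteq> j" "?h i = ?h j" unfolding inj_on_def by auto
  have main: "\<exists>p>0. (g ^^ p) d = d" if "i < j" "?h i = ?h j" for i j
  proof -
    have "(g ^^ i) ((g ^^ (j - i)) d) = (g ^^ i) d"
      using that by (metis add_diff_inverse_nat comp_apply funpow_add less_imp_not_less)
    moreover have "inj_on (g ^^ i) E" using bij_betw_funpow[OF bij] bij_betw_def by blast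
    ultimately have "(g ^^ (j - i)) d = d"
      using funpow_in[OF bij d] d by (meson inj_onD)
    thus ?thesis using that by (intro exI[of _ "j-i"]) auto
  qed
  show ?thesis using ij main[of i j] main[of j i] by (metis linorder_neqE_nat)
qed

lemma orbit_back:
  assumes fin: "finite E" and bij: "bij_betw g E E" and d: "d \<in> E"
  shows "\<exists>k. (g ^^ k) ((g ^^ m) d) = d"
proof -
  obtain p where p: "p > 0" "(g ^^ p) d = d" using orbit_period[OF assms] by auto
  have pn: "(g ^^ (p * n)) d = d" for n
    by (induction n) (simp_all add: funpow_add p(2))
  have "m \<le> p * m" using p(1) by simp
  hence "(g ^^ (p * m - m)) ((g ^^ m) d) = (g ^^ (p*m)) d"
    by (metis le_add_diff_inverse2 comp_apply funpow_add)
  thus ?thesis using pn by auto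
qed

lemma fp_bij:
  assumes "simple_graph V E" "rotation_system E rot"
  shows "bij_betw (face_perm rot) E E"
proof -
  have sw: "bij_betw (\<lambda>(a,b). (b,a)) E E"
    using assms(1) unfolding simple_graph_def bij_betw_def inj_on_def
    by (auto simp: sym_def image_def) (metis case_prod_conv)
  have "face_perm rot = rot \<circ> (\<lambda>(a,b). (b,a))"
    by (auto simp: face_perm_def fun_eq_iff)
  thus ?thesis using sw assms(2) unfolding rotation_system_def
    using bij_betw_trans by metis
qed

lemma face_self: "d \<in> face_of rot d"
  unfolding face_of_def by (auto intro: exI[of _ 0])

lemma face_step: "x \<in> face_of rot d \<Longrightarrow> face_perm rot x \<in> face_of rot d"
  unfolding face_of_def by auto (metis funpow.simps(2) comp_apply)

lemma face_sub:
  assumes "bij_betw (face_perm rot) E E" "d \<in> E"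
  shows "face_of rot d \<subseteq> E"
  unfolding face_of_def using funpow_in[OF assms] by auto

lemma face_same:
  assumes fin: "finite E" and bij: "bij_betw (face_perm rot) E E" and d: "d \<in> E"
    and x: "x \<in> face_of rot d"
  shows "face_of rot x = face_of rot d"
proof -
  obtain m where m: "x = (face_perm rot ^^ m) d" using x unfolding face_of_def by auto
  obtain k where k: "(face_perm rot ^^ k) x = d" using orbit_back[OF fin bij d, of m] m by auto
  show ?thesis
  proof
    show "face_of rot x \<subseteq> face_of rot d"
      unfolding face_of_def m by (auto simp: funpow_add[symmetric] simp del: funpow.simps)
        (metis comp_apply funpow_add)
    show "face_of rot d \<subseteq> face_of rot x"
      unfolding face_of_def using k
      by auto (metis comp_apply funpow_add)
  qed
qed


lemma nxt_inj: "i < L \<Longrightarrow> j < L \<Longrightarrow> (i+1) mod L = (j+1) mod (L::nat) \<Longrightarrow> i = j"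
  by (cases "i + 1 < L"; cases "j + 1 < L") (auto simp: mod_if split: if_splits)

lemma nxt2_ne: "3 \<le> L \<Longrightarrow> j < L \<Longrightarrow> ((j+1) mod L + 1) mod L \<noteq> (j::nat)"
  by (cases "j + 1 < L"; cases "j + 2 < L") (auto simp: mod_if split: if_splits)

lemma prev_nxt: "j < L \<Longrightarrow> ((j+L-1) mod L + 1) mod L = (j::nat)"
  by (cases "j = 0") (auto simp: mod_if split: if_splits)

lemma prev_ne: "3 \<le> L \<Longrightarrow> j < L \<Longrightarrow> (j+L-1) mod L \<noteq> (j+1) mod (L::nat)"
  by (cases "j = 0"; cases "j + 1 < L") (auto simp: mod_if split: if_splits)

lemma prev_lt: "j < L \<Longrightarrow> (j+L-1) mod L < (L::nat)"
  by auto

theorem mainTheorem2: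
  fixes B :: "'a set" and cs :: "'a list" and V :: "'a set"
    and E :: "('a \<times> 'a) set" and rot :: "'a \<times> 'a \<Rightarrow> 'a \<times> 'a"
  assumes "BC_graph B cs V E rot"
  shows "num_minor_faces B E rot \<ge> card V - card (set cs) + 2"
proof -
  note A = assms[unfolded BC_graph_def]
  have dist: "distinct cs" and L3: "length cs \<ge> 3" and finB: "finite B"
    and disj: "B \<inter> set cs = {}" and pl: "plane_graph V E rot" and Vdef: "V = B \<union> set cs"
    and cyc: "\<And>u v. u \<in> set cs \<Longrightarrow> v \<in> set cs \<Longrightarrow> (u, v) \<in> E \<longleftrightarrow> cycle_edge cs u v"
    and indep: "\<And>u v. u \<in> B \<Longrightarrow> v \<in> B \<Longrightarrow> (u, v) \<notin> E"
    and deg: "\<And>b. b \<in> B \<Longrightarrow> card {w. (b, w) \<in> E} = 3"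
    using A by auto
  have sg: "simple_graph V E" and rs: "rotation_system E rot"
    and euler: "2 * (card V + card (faces E rot)) = card E + 4"
    using pl unfolding plane_graph_def by auto
  have finV: "finite V" and EV: "E \<subseteq> V \<times> V" and symE: "\<And>x y. (x,y) \<in> E \<Longrightarrow> (y,x) \<in> E"
    using sg unfolding simple_graph_def sym_def by auto
  have finE: "finite E" using finV EV finite_subset by blast
  have bij: "bij_betw (face_perm rot) E E" using fp_bij[OF sg rs] .
  have rot_fst: "\<And>d. d \<in> E \<Longrightarrow> fst (rot d) = fst d"
    and rot_in: "\<And>d. d \<in> E \<Longrightarrow> rot d \<in> E"
    and rot_orb: "\<And>d d'. d \<in> E \<Longrightarrow> d' \<in> E \<Longrightarrow> fst d' = fst d \<Longrightarrow> \<exists>n. (rot ^^ n) d = d'"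
    using rs unfolding rotation_system_def bij_betw_def by auto
  define F where "F = faces E rot"
  define C where "C = set cs"
  define L where "L = length cs"
  define DB where "DB = {d \<in> E. fst d \<in> B}"
  define nx where "nx j = (j + 1) mod L" for j
  define fw where "fw j = (cs ! j, cs ! nx j)" for j
  define bw where "bw j = (cs ! nx j, cs ! j)" for j
  have L3': "3 \<le> L" using L3 L_def by simp
  have nx_lt: "\<And>j. nx j < L" using L3' nx_def by simp
  have csC: "\<And>j. j < L \<Longrightarrow> cs ! j \<in> C" using C_def L_def by simp
  have cs_eq: "\<And>i j. i < L \<Longrightarrow> j < L \<Longrightarrow> cs ! i = cs ! j \<longleftrightarrow> i = j"
    using dist L_def nth_eq_iff_index_eq by metis
  have fw_E: "fw j \<in> E" if j: "j < L" for j
  proof -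
    have ce: "cycle_edge cs (cs ! j) (cs ! nx j)"
      unfolding cycle_edge_def nx_def using j L_def by blast
    have "cs ! j \<in> set cs" "cs ! nx j \<in> set cs" using csC[OF j] csC[OF nx_lt] C_def by auto
    thus ?thesis using cyc ce unfolding fw_def by blast
  qed
  have bw_E: "bw j \<in> E" if j: "j < L" for j
    using fw_E[OF j] symE unfolding fw_def bw_def by simp
  have F_def': "\<And>f. f \<in> F \<longleftrightarrow> (\<exists>d\<in>E. f = face_of rot d)"
    unfolding F_def faces_def by auto
  have F_sub: "f \<subseteq> E" if fF: "f \<in> F" for f
  proof -
    obtain d where "d \<in> E" "f = face_of rot d" using fF F_def' by auto
    thus ?thesis using face_sub[OF bij] by simp
  qed
  have F_same: "face_of rot x = f" if fF: "f \<in> F" and xf: "x \<in> f" for f x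
  proof -
    obtain d where "d \<in> E" "f = face_of rot d" using fF F_def' by auto
    thus ?thesis using face_same[OF finE bij] xf by simp
  qed
  have F_step: "face_perm rot x \<in> f" if fF: "f \<in> F" and xf: "x \<in> f" for f x
  proof -
    obtain d where "d \<in> E" "f = face_of rot d" using fF F_def' by auto
    thus ?thesis using face_step xf by simp
  qed
  have S: "\<exists>w. (y, w) \<in> f \<and> w \<noteq> x \<and> cycle_edge cs y w"
    if f: "f \<in> F" and nb: "\<forall>d\<in>f. fst d \<notin> B" and xy: "(x, y) \<in> f" and z: "z \<noteq> x" "(y, z) \<in> E"
    for f x y z
  proof -
    have xyE: "(x, y) \<in> E" using F_sub f xy by blast
    have yxE: "(y, x) \<in> E" using symE xyE by blast
    have r1: "rot (y, x) \<in> f" using F_step[OF f xy] unfolding face_perm_def by simp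
    obtain a w where rw: "rot (y, x) = (a, w)" by (cases "rot (y, x)")
    have "a = y" using rot_fst[OF yxE] rw by simp
    hence yw: "(y, w) \<in> f" using r1 rw by simp
    have ywE: "(y, w) \<in> E" using F_sub f yw by blast
    have wx: "w \<noteq> x"
    proof
      assume "w = x"
      hence fix1: "rot (y, x) = (y, x)" using rw \<open>a = y\<close> by simp
      have "(rot ^^ n) (y, x) = (y, x)" for n by (induction n) (simp_all add: fix1)
      moreover obtain n where "(rot ^^ n) (y, x) = (y, z)" using rot_orb[OF yxE z(2)] by auto
      ultimately show False using z(1) by simp
    qed
    have "face_perm rot (y, w) \<in> f" using F_step[OF f yw] .
    hence "rot (w, y) \<in> f" unfolding face_perm_def by simp
    moreover have "fst (rot (w, y)) = w" using rot_fst symE[OF ywE] by fastforce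
    ultimately have wB: "w \<notin> B" using nb by fastforce
    have yB: "y \<notin> B" using nb yw by fastforce
    have "w \<in> C" "y \<in> C" using wB yB ywE EV Vdef C_def by auto
    hence "cycle_edge cs y w" using cyc ywE C_def by blast
    thus ?thesis using yw wx by blast
  qed
  have fwd_step: "fw (nx j) \<in> f"
    if f: "f \<in> F" and nb: "\<forall>d\<in>f. fst d \<notin> B" and j: "j < L" and fj: "fw j \<in> f" for f j
  proof -
    have zx: "cs ! nx (nx j) \<noteq> cs ! j"
      using cs_eq nx_lt j nxt2_ne[OF L3' j] nx_def by metis
    obtain w where w: "(cs ! nx j, w) \<in> f" "w \<noteq> cs ! j" "cycle_edge cs (cs ! nx j) w"
      using S[OF f nb fj[unfolded fw_def] zx fw_E[OF nx_lt, unfolded fw_def]] by blast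
    then obtain i where i: "i < L" "(cs ! nx j = cs ! i \<and> w = cs ! nx i) \<or> (w = cs ! i \<and> cs ! nx j = cs ! nx i)"
      unfolding cycle_edge_def nx_def L_def by blast
    show ?thesis
    proof (cases "cs ! nx j = cs ! i \<and> w = cs ! nx i")
      case True
      hence "i = nx j" using cs_eq i(1) nx_lt by metis
      thus ?thesis using True w(1) fw_def by simp
    next
      case False
      hence "w = cs ! i" "nx j = nx i" using i cs_eq nx_lt by metis+
      hence "i = j" using nxt_inj[OF i(1) j] nx_def by metis
      thus ?thesis using w(2) \<open>w = cs ! i\<close> by simp
    qed
  qed
  have bwd_step: "bw j \<in> f"
    if f: "f \<in> F" and nb: "\<forall>d\<in>f. fst d \<notin> B" and j: "Suc j < L" and fj: "bw (Suc j) \<in> f" for f j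
  proof -
    have nj: "nx j = Suc j" using j nx_def by simp
    have jL: "j < L" using j by simp
    have zx: "cs ! j \<noteq> cs ! nx (Suc j)"
      using cs_eq nx_lt jL nxt2_ne[OF L3' jL] nx_def nj by metis
    obtain w where w: "(cs ! Suc j, w) \<in> f" "w \<noteq> cs ! nx (Suc j)" "cycle_edge cs (cs ! Suc j) w"
      using S[OF f nb fj[unfolded bw_def] zx] bw_E[OF jL] nj bw_def by auto
    then obtain i where i: "i < L" "(cs ! Suc j = cs ! i \<and> w = cs ! nx i) \<or> (w = cs ! i \<and> cs ! Suc j = cs ! nx i)"
      unfolding cycle_edge_def nx_def L_def by blast
    show ?thesis
    proof (cases "cs ! Suc j = cs ! i \<and> w = cs ! nx i")
      case True
      hence "i = Suc j" using cs_eq i(1) j by metis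
      thus ?thesis using True w(2) by simp
    next
      case False
      hence "w = cs ! i" "Suc j = nx i" using i cs_eq nx_lt j by metis+
      hence "i = j" using nxt_inj[OF i(1) jL] nx_def nj by metis
      thus ?thesis using w(1) \<open>w = cs ! i\<close> bw_def nj by simp
    qed
  qed
  have F0: "{f \<in> F. \<forall>d\<in>f. fst d \<notin> B} \<subseteq> {face_of rot (fw 0), face_of rot (bw 0)}"
  proof
    fix f assume "f \<in> {f \<in> F. \<forall>d\<in>f. fst d \<notin> B}"
    hence f: "f \<in> F" and nb: "\<forall>d\<in>f. fst d \<notin> B" by auto
    obtain d0 where d0: "d0 \<in> E" "f = face_of rot d0" using f F_def' by auto
    obtain u v where uv: "d0 = (u, v)" by (cases d0)
    have uvf: "(u, v) \<in> f" using face_self d0 uv by metis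
    have "face_perm rot (u, v) \<in> f" using F_step[OF f uvf] .
    moreover have "fst (face_perm rot (u, v)) = v"
      unfolding face_perm_def using rot_fst symE d0(1) uv by fastforce
    ultimately have "v \<notin> B" using nb by fastforce
    moreover have "u \<notin> B" using nb uvf by fastforce
    ultimately have "u \<in> C" "v \<in> C" using d0(1) uv EV Vdef C_def by auto
    hence "cycle_edge cs u v" using cyc d0(1) uv C_def by blast
    then obtain i where i: "i < L" "(u = cs ! i \<and> v = cs ! nx i) \<or> (v = cs ! i \<and> u = cs ! nx i)"
      unfolding cycle_edge_def nx_def L_def by blast
    show "f \<in> {face_of rot (fw 0), face_of rot (bw 0)}"
    proof (cases "u = cs ! i \<and> v = cs ! nx i")
      case True
      hence fi: "fw i \<in> f" using uvf fw_def by simp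
      have "fw ((i + m) mod L) \<in> f" for m
      proof (induction m)
        case 0 then show ?case using fi i(1) by simp
      next
        case (Suc m)
        have "fw (nx ((i + m) mod L)) \<in> f"
          using fwd_step[OF f nb _ Suc] L3' by simp
        moreover have "nx ((i + m) mod L) = (i + Suc m) mod L"
          unfolding nx_def by (simp add: mod_simps)
        ultimately show ?case by simp
      qed
      from this[of "L - i"] have "fw 0 \<in> f" using i(1) by simp
      thus ?thesis using F_same[OF f] by auto
    next
      case False
      hence fi: "bw i \<in> f" using uvf bw_def i(2) by auto
      have "\<forall>j. j < L \<longrightarrow> bw j \<in> f \<longrightarrow> bw 0 \<in> f"
      proof
        fix j show "j < L \<longrightarrow> bw j \<in> f \<longrightarrow> bw 0 \<in> f"
        proof (induction j)
          case 0 show ?case by simp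
        next
          case (Suc j)
          show ?case
          proof (intro impI)
            assume a: "Suc j < L" "bw (Suc j) \<in> f"
            hence "bw j \<in> f" using bwd_step[OF f nb] by blast
            thus "bw 0 \<in> f" using Suc.IH a(1) by simp
          qed
        qed
      qed
      hence "bw 0 \<in> f" using fi i(1) by blast
      thus ?thesis using F_same[OF f] by auto
    qed
  qed
  define Z where "Z = {f \<in> F. \<forall>d\<in>f. fst d \<notin> B}"
  define M where "M = {f \<in> F. \<not> minor_face B f}"
  define k where "k = card B"
  have finF: "finite F" unfolding F_def faces_def using finE by simp
  have Zsub: "Z \<subseteq> F" and Msub: "M \<subseteq> F" unfolding Z_def M_def by auto
  have cardZ: "card Z \<le> 2"
  proof -
    have "card Z \<le> card {face_of rot (fw 0), face_of rot (bw 0)}"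
      using F0 unfolding Z_def by (intro card_mono) auto
    also have "\<dots> \<le> 2" by (simp add: card_insert_if)
    finally show ?thesis .
  qed
  have finDB: "finite DB" unfolding DB_def using finE by simp
  have sumDB: "card DB = (\<Sum>f\<in>F. card (f \<inter> DB))"
  proof -
    have "(\<Union>f\<in>F. f \<inter> DB) = DB"
    proof
      show "(\<Union>f\<in>F. f \<inter> DB) \<subseteq> DB" by auto
      show "DB \<subseteq> (\<Union>f\<in>F. f \<inter> DB)"
      proof
        fix d assume d: "d \<in> DB"
        hence "d \<in> E" unfolding DB_def by simp
        hence "face_of rot d \<in> F" using F_def' by auto
        thus "d \<in> (\<Union>f\<in>F. f \<inter> DB)" using d face_self by fast
      qed
    qed
    moreover have "card (\<Union>f\<in>F. f \<inter> DB) = (\<Sum>f\<in>F. card (f \<inter> DB))"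
    proof (rule card_UN_disjoint[OF finF])
      show "\<forall>f\<in>F. finite (f \<inter> DB)" using finDB by simp
      show "\<forall>f\<in>F. \<forall>g\<in>F. f \<noteq> g \<longrightarrow> f \<inter> DB \<inter> (g \<inter> DB) = {}"
        using F_same by blast
    qed
    ultimately show ?thesis by simp
  qed
  have NBfin: "\<And>v. finite {w. (v, w) \<in> E}"
  proof -
    fix v have "{w. (v, w) \<in> E} \<subseteq> V" using EV by auto
    thus "finite {w. (v, w) \<in> E}" using finV finite_subset by blast
  qed
  have DB_Sig: "DB = Sigma B (\<lambda>b. {w. (b, w) \<in> E})" unfolding DB_def by auto
  have cardDB: "card DB = 3 * k"
    unfolding DB_Sig k_def using finB NBfin deg by simp
  define ECC where "ECC = E \<inter> (C \<times> C)"
  have finC: "finite C" unfolding C_def by simp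
  have cardC: "card C = L" unfolding C_def L_def using dist distinct_card by blast
  have cardECC: "card ECC \<ge> 2 * L"
  proof -
    have ECC_Sig: "ECC = Sigma C (\<lambda>c. {w \<in> C. (c, w) \<in> E})" unfolding ECC_def by auto
    have "\<forall>c\<in>C. 2 \<le> card {w \<in> C. (c, w) \<in> E}"
    proof
      fix c assume "c \<in> C"
      then obtain j where j: "j < L" "c = cs ! j" unfolding C_def L_def by (auto simp: in_set_conv_nth)
      define p where "p = (j + L - 1) mod L"
      have p: "p < L" "nx p = j" "p \<noteq> nx j"
        using prev_nxt[OF j(1)] prev_ne[OF L3' j(1)] prev_lt[OF j(1)] unfolding p_def nx_def by auto
      have "cs ! p \<noteq> cs ! nx j" using cs_eq p nx_lt by metis
      moreover have "{cs ! nx j, cs ! p} \<subseteq> {w \<in> C. (c, w) \<in> E}"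
        using fw_E[OF j(1)] bw_E[OF p(1)] p j csC nx_lt unfolding fw_def bw_def by auto
      ultimately show "2 \<le> card {w \<in> C. (c, w) \<in> E}"
        using card_mono[of "{w \<in> C. (c, w) \<in> E}" "{cs ! nx j, cs ! p}"] finC by auto
    qed
    hence "(\<Sum>c\<in>C. 2) \<le> (\<Sum>c\<in>C. card {w \<in> C. (c, w) \<in> E})" by (intro sum_mono) auto
    thus ?thesis unfolding ECC_Sig using finC cardC by simp
  qed
  have cardE: "card E \<ge> 6 * k + 2 * L"
  proof -
    have d1: "DB \<inter> DB\<inverse> = {}" unfolding DB_def using indep by auto
    have d2: "(DB \<union> DB\<inverse>) \<inter> ECC = {}" unfolding DB_def ECC_def C_def using disj by auto
    have sub: "DB \<union> DB\<inverse> \<union> ECC \<subseteq> E" unfolding DB_def ECC_def using symE by auto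
    have "card (DB \<union> DB\<inverse> \<union> ECC) = card DB + card (DB\<inverse>) + card ECC"
      using d1 d2 finDB finE ECC_def by (simp add: card_Un_disjoint)
    hence "card (DB \<union> DB\<inverse> \<union> ECC) \<ge> 6 * k + 2 * L" using cardDB cardECC by simp
    thus ?thesis using card_mono[OF finE sub] by simp
  qed
  have cardV: "card V = k + L" unfolding Vdef k_def using cardC finB finC disj C_def
    by (simp add: card_Un_disjoint)
  have cardF: "card F \<ge> 2 * k + 2" using euler cardE cardV F_def by simp
  have M_ge: "card (f \<inter> DB) \<ge> 2" if "f \<in> M" for f
  proof -
    have f: "f \<in> F" "\<not> minor_face B f" using that M_def by auto
    have "fst ` (f \<inter> DB) = {v \<in> B. face_incident f v}"
      unfolding DB_def face_incident_def using F_sub[OF f(1)] by auto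
    moreover have "card {v \<in> B. face_incident f v} \<ge> 2" using f(2) unfolding minor_face_def by simp
    ultimately show ?thesis using card_image_le[of "f \<inter> DB" fst] finDB by simp
  qed
  have MZ: "M \<subseteq> F - Z"
  proof
    fix f assume fM: "f \<in> M"
    hence "f \<inter> DB \<noteq> {}" using M_ge by fastforce
    thus "f \<in> F - Z" using fM unfolding M_def Z_def DB_def by auto
  qed
  have FZ_ge: "card (f \<inter> DB) \<ge> 1" if "f \<in> F - Z" for f
  proof -
    have "f \<inter> DB \<noteq> {}" using that F_sub unfolding Z_def DB_def by blast
    thus ?thesis using finDB by (simp add: Suc_le_eq card_gt_0_iff)
  qed
  have "(\<Sum>f\<in>F. card (f \<inter> DB)) = (\<Sum>f\<in>F - Z. card (f \<inter> DB)) + (\<Sum>f\<in>Z. card (f \<inter> DB))"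
    using sum.subset_diff[OF Zsub finF] by simp
  also have "(\<Sum>f\<in>Z. card (f \<inter> DB)) = 0"
  proof (intro sum.neutral ballI)
    fix f assume "f \<in> Z"
    hence "f \<inter> DB = {}" unfolding Z_def DB_def by auto
    thus "card (f \<inter> DB) = 0" by simp
  qed
  also have "(\<Sum>f\<in>F - Z. card (f \<inter> DB)) = (\<Sum>f\<in>(F - Z) - M. card (f \<inter> DB)) + (\<Sum>f\<in>M. card (f \<inter> DB))"
    using sum.subset_diff[OF MZ] finF by simp
  finally have sum_eq: "card DB = (\<Sum>f\<in>(F - Z) - M. card (f \<inter> DB)) + (\<Sum>f\<in>M. card (f \<inter> DB))"
    using sumDB by simp
  have s1: "(\<Sum>f\<in>(F - Z) - M. card (f \<inter> DB)) \<ge> (\<Sum>f\<in>(F - Z) - M. 1)"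
    using FZ_ge by (intro sum_mono) auto
  have s2: "(\<Sum>f\<in>M. card (f \<inter> DB)) \<ge> (\<Sum>f\<in>M. 2)"
    using M_ge by (intro sum_mono) auto
  have finM: "finite M" using finite_subset[OF Msub finF] .
  have c1: "card ((F - Z) - M) = card F - card Z - card M"
    using MZ Zsub finF finM by (simp add: card_Diff_subset finite_subset)
  have "card M \<le> card F - card Z" using card_mono[OF _ MZ] finF card_Diff_subset[OF _ Zsub]
    by (metis finite_Diff finite_subset[OF Zsub finF])
  hence key: "3 * k \<ge> card F - card Z + card M"
    using sum_eq s1 s2 c1 cardDB by simp
  have minor_eq: "{f \<in> faces E rot. minor_face B f} = F - M" unfolding M_def F_def by auto
  have "num_minor_faces B E rot = card F - card M"
    unfolding num_minor_faces_def minor_eq using card_Diff_subset[OF finM Msub] .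
  moreover have "card V - card (set cs) = k" using cardV cardC C_def by simp
  ultimately show ?thesis using key cardF cardZ by linarith
qed

end
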